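(* Let $f$ be a bounded analytic function in the unit disc $D=\{|z|<1\}$, written as $f(z)=\sum_{j=0}^\infty(-a_j)z^j$, and let $n_0=n_0(f)$. Then there exists an integer $n_1=n_1(f)\ge n_0$ such that for every $n\ge n_1$, with $N=2n+1$: (1) all $N$ roots $z_1,\dots,z_N$ of the polynomial $P_n(f;z)$ are simple and lie on the unit circle $|z|=1$; (2) the points $\lambda_k:=z_k^{-1}$, $k=1,\dots,N$, are pairwise distinct, satisfy $|\lambda_k|=1$, and \[S_{j+1}(\lambda)-a_j=0,\qquad j=0,\dots,n-1,\] \[|S_{j+1}(\lambda)-a_j|<\frac{r^{n+1}(r-\varepsilon)^{-j}}{2\varepsilon(1-r)},\qquad j\ge n,\] for any numbers $r,\varepsilon$ with $0<\varepsilon<r<1$. Moreover, for the equalities $S_{j+1}(\lambda)-a_j=0$, $j=0,\dots,n-1$, to hold (with $\lambda_k$ the reciprocals of the roots of $P_n(f;z)$) it suffices that $n\ge n_0$.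
   Context: For $f$ analytic in $D$, $s_n(z)=s_n(f;z)$ denotes the $n$-th Taylor polynomial (degree $\le n$) of $\exp\left(\int_0^z f(\zeta)\,d\zeta\right)$; note $s_n(0)=1$. With $N:=2n+1$, set $P_n(z)=P_n(f;z):=s_n(z)+z^N\overline{s}_n(1/z)$, where $\overline{s}_n$ is the polynomial whose coefficients are the complex conjugates of those of $s_n$; $\deg P_n=N$. $n_0(f)$ is the smallest natural number $n$ such that $s_n(f;z)$ has no roots in the closed disc $|z|\le 1$. For points $\lambda_1,\dots,\lambda_N$ on the unit circle, $S_\nu(\lambda)=\lambda_1^\nu+\dots+\lambda_N^\nu$, $\nu\in\mathbb{N}$. *)

theory Defs
  imports "HOL-Complex_Analysis.Complex_Analysis" "HOL-Computational_Algebra.Polynomial"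
begin

definition prim :: "(complex \<Rightarrow> complex) \<Rightarrow> complex \<Rightarrow> complex" where
  "prim f z = contour_integral (linepath 0 z) f"

definition tcoeff :: "(complex \<Rightarrow> complex) \<Rightarrow> nat \<Rightarrow> complex" where
  "tcoeff f k = (deriv ^^ k) (\<lambda>z. exp (prim f z)) 0 / of_nat (fact k)"

definition spoly :: "(complex \<Rightarrow> complex) \<Rightarrow> nat \<Rightarrow> complex poly" where
  "spoly f n = (\<Sum>k\<le>n. monom (tcoeff f k) k)"

text \<open>P_n(f;z) = s_n(z) + z^N conj-s_n(1/z), N = 2n+1.\<close>
definition Ppoly :: "(complex \<Rightarrow> complex) \<Rightarrow> nat \<Rightarrow> complex poly" where
  "Ppoly f n = spoly f n + (\<Sum>k\<le>n. monom (cnj (tcoeff f k)) (2*n+1 - k))"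

definition s_nonvanishing :: "(complex \<Rightarrow> complex) \<Rightarrow> nat \<Rightarrow> bool" where
  "s_nonvanishing f n \<longleftrightarrow> (\<forall>z. norm z \<le> 1 \<longrightarrow> poly (spoly f n) z \<noteq> 0)"

definition n0 :: "(complex \<Rightarrow> complex) \<Rightarrow> nat" where
  "n0 f = (LEAST n. s_nonvanishing f n)"

definition Spow :: "(complex \<Rightarrow> complex) \<Rightarrow> nat \<Rightarrow> nat \<Rightarrow> complex" where
  "Spow f n \<nu> = (\<Sum>z\<in>#proots (Ppoly f n). (inverse z) ^ \<nu>)"

end

theory Submission
  imports Defs "HOL-Computational_Algebra.Fundamental_Theorem_Algebra"
begin

lemma prim_deriv:
  assumes hol: "f holomorphic_on ball 0 1" and z: "z \<in> ball 0 1"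
  shows "(prim f has_field_derivative f z) (at z)"
proof -
  have "((\<lambda>x. contour_integral (linepath 0 x) f) has_field_derivative f z) (at z within ball 0 1)"
  proof (rule triangle_contour_integrals_convex_primitive)
    show "continuous_on (ball 0 1) f" using hol holomorphic_on_imp_continuous_on by blast
    fix b c assume b: "b \<in> ball (0::complex) 1" and c: "c \<in> ball (0::complex) 1"
    have "(f has_contour_integral 0) (linepath 0 b +++ linepath b c +++ linepath c 0)"
    proof (rule Cauchy_theorem_convex_simple[OF hol])
      have "path_image (linepath 0 b +++ linepath b c +++ linepath c 0) =
            closed_segment 0 b \<union> closed_segment b c \<union> closed_segment c 0"
        by (simp add: path_image_join Un_assoc)
      also have "\<dots> \<subseteq> ball 0 1"
        using b c by (intro Un_least closed_segment_subset) (auto intro: convex_ball)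
      finally show "path_image (linepath 0 b +++ linepath b c +++ linepath c 0) \<subseteq> ball 0 1" .
    qed auto
    then show "contour_integral (linepath 0 b) f + contour_integral (linepath b c) f +
               contour_integral (linepath c 0) f = 0"
      by (rule has_chain_integral_chain_integral3)
  qed (use z in auto)
  then show ?thesis unfolding prim_def[abs_def]
    using at_within_open[OF z open_ball] by simp
qed

definition EE :: "(complex \<Rightarrow> complex) \<Rightarrow> complex \<Rightarrow> complex" where
  "EE f z = exp (prim f z)"

lemma EE_deriv:
  assumes hol: "f holomorphic_on ball 0 1" and z: "z \<in> ball 0 1"
  shows "(EE f has_field_derivative f z * EE f z) (at z)"
  unfolding EE_def[abs_def]
  using DERIV_chain2[OF DERIV_exp prim_deriv[OF hol z]] by (simp add: mult.commute)

lemma EE_holo: "f holomorphic_on ball 0 1 \<Longrightarrow> EE f holomorphic_on ball 0 1"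
  using EE_deriv by (metis holomorphic_on_open open_ball)

lemma EE_0: "EE f 0 = 1"
  by (simp add: EE_def prim_def)

lemma tcoeff_EE: "tcoeff f k = (deriv ^^ k) (EE f) 0 / fact k"
  by (simp add: tcoeff_def EE_def[abs_def])

lemma EE_sums:
  assumes hol: "f holomorphic_on ball 0 1" and z: "z \<in> ball 0 1"
  shows "(\<lambda>k. tcoeff f k * z ^ k) sums EE f z"
  using holomorphic_power_series[OF EE_holo[OF hol] z] by (simp add: tcoeff_EE)

lemma tcoeff_0: "tcoeff f 0 = 1"
  by (simp add: tcoeff_def prim_def)

lemma prim_bound:
  assumes hol: "f holomorphic_on ball 0 1" and z: "z \<in> ball 0 1"
    and M: "\<And>w. w \<in> ball 0 1 \<Longrightarrow> norm (f w) \<le> M"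
  shows "norm (prim f z) \<le> M * norm z"
proof -
  have sub: "closed_segment 0 z \<subseteq> ball 0 1"
    using z by (intro closed_segment_subset) (auto intro: convex_ball)
  have "(f has_contour_integral prim f z) (linepath 0 z)"
    unfolding prim_def
    by (rule has_contour_integral_integral, rule contour_integrable_holomorphic_simple[OF hol])
       (use sub in auto)
  have M0: "0 \<le> M" using M[of 0] by (simp add: order_trans[OF norm_ge_zero])
  then have "norm (prim f z) \<le> M * norm (z - 0)"
    using \<open>(f has_contour_integral prim f z) (linepath 0 z)\<close>
    by (intro has_contour_integral_bound_linepath) (use M sub in auto)
  then show ?thesis by simp
qed

lemma lin_inv_fps:
  fixes z :: complex assumes "z \<noteq> 0"
  shows "(fps_X + fps_const (-z)) * Abs_fps (\<lambda>k. - ((inverse z) ^ (k+1))) = 1"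
proof (rule fps_ext)
  fix m
  show "fps_nth ((fps_X + fps_const (-z)) * Abs_fps (\<lambda>k. - ((inverse z) ^ (k+1)))) m = fps_nth (1::complex fps) m"
  proof (cases m)
    case 0 then show ?thesis using assms by (simp add: algebra_simps fps_mult_nth)
  next
    case (Suc k)
    have "((fps_X + fps_const (-z)) * Abs_fps (\<lambda>k. - ((inverse z) ^ (k+1)))) =
          fps_X * Abs_fps (\<lambda>k. - ((inverse z) ^ (k+1))) + fps_const (-z) * Abs_fps (\<lambda>k. - ((inverse z) ^ (k+1)))"
      by (simp add: distrib_right)
    then show ?thesis using Suc assms by (simp add: field_simps)
  qed
qed

lemma logderiv_prod:
  fixes Z :: "complex multiset"
  assumes "0 \<notin># Z"
  shows "fps_deriv (\<Prod>z\<in>#Z. fps_X + fps_const (-z)) =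
         (\<Prod>z\<in>#Z. fps_X + fps_const (-z)) * Abs_fps (\<lambda>k. - (\<Sum>z\<in>#Z. (inverse z) ^ (k+1)))"
  using assms
proof (induction Z)
  case empty
  then show ?case by (simp add: fps_ext)
next
  case (add x Z)
  let ?P = "\<Prod>z\<in>#Z. fps_X + fps_const (-z)"
  let ?T = "Abs_fps (\<lambda>k. - (\<Sum>z\<in>#Z. (inverse z) ^ (k+1)))"
  let ?Tx = "Abs_fps (\<lambda>k. - ((inverse x) ^ (k+1)))"
  have x0: "x \<noteq> 0" using add.prems by auto
  have IH: "fps_deriv ?P = ?P * ?T" using add by auto
  have T: "Abs_fps (\<lambda>k. - (\<Sum>z\<in>#add_mset x Z. (inverse z) ^ (k+1))) = ?Tx + ?T"
    by (rule fps_ext) simp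
  have "fps_deriv (\<Prod>z\<in>#add_mset x Z. fps_X + fps_const (-z)) =
        fps_deriv ((fps_X + fps_const (-x)) * ?P)" by simp
  also have "\<dots> = ?P + (fps_X + fps_const (-x)) * (?P * ?T)"
    by (simp add: fps_deriv_mult IH)
  also have "\<dots> = ((fps_X + fps_const (-x)) * ?Tx) * ?P + (fps_X + fps_const (-x)) * (?P * ?T)"
    using lin_inv_fps[OF x0] by simp
  also have "\<dots> = ((fps_X + fps_const (-x)) * ?P) * (?Tx + ?T)"
    by (simp add: algebra_simps)
  finally show ?case using T by simp
qed

lemma coeff_Ppoly:
  "coeff (Ppoly f n) k = (if k \<le> n then tcoeff f k else if k \<le> 2*n+1 then cnj (tcoeff f (2*n+1-k)) else 0)"
proof -
  have a: "coeff (spoly f n) k = (if k \<le> n then tcoeff f k else 0)"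
    unfolding spoly_def by (simp add: coeff_sum coeff_monom)
  have b: "coeff (\<Sum>j\<le>n. monom (cnj (tcoeff f j)) (2*n+1 - j)) k =
           (\<Sum>j\<le>n. if 2*n+1-j = k then cnj (tcoeff f j) else 0)"
    by (simp add: coeff_sum coeff_monom)
  also have "\<dots> = (if n < k \<and> k \<le> 2*n+1 then cnj (tcoeff f (2*n+1-k)) else 0)"
  proof (cases "n < k \<and> k \<le> 2*n+1")
    case True
    then have "(\<Sum>j\<le>n. if 2*n+1-j = k then cnj (tcoeff f j) else 0) =
               (\<Sum>j\<in>{2*n+1-k}. if 2*n+1-j = k then cnj (tcoeff f j) else 0)"
      by (intro sum.mono_neutral_right) auto
    then show ?thesis using True by simp
  next
    case False
    then show ?thesis by (intro trans[OF sum.neutral]) auto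
  qed
  finally show ?thesis unfolding Ppoly_def using a by (auto simp: coeff_add)
qed

lemma degree_Ppoly: "degree (Ppoly f n) = 2*n+1" and lead_Ppoly: "lead_coeff (Ppoly f n) = 1"
proof -
  have c: "coeff (Ppoly f n) (2*n+1) = 1" by (simp add: coeff_Ppoly tcoeff_0)
  have "degree (Ppoly f n) \<le> 2*n+1" by (rule degree_le) (auto simp: coeff_Ppoly)
  moreover have "degree (Ppoly f n) \<ge> 2*n+1" using c by (intro le_degree) simp
  ultimately show d: "degree (Ppoly f n) = 2*n+1" by simp
  show "lead_coeff (Ppoly f n) = 1" using c d by simp
qed

lemma Ppoly_0: "poly (Ppoly f n) 0 = 1"
  by (simp add: poly_0_coeff_0 coeff_Ppoly tcoeff_0)

lemma Ppoly_nz: "Ppoly f n \<noteq> 0"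
  using lead_Ppoly[of f n] by auto

lemma fps_of_poly_prod_mset:
  "fps_of_poly (\<Prod>x\<in>#Z. g x) = (\<Prod>x\<in>#Z. fps_of_poly (g x))"
  by (induction Z) (simp_all add: fps_of_poly_mult)

lemma Ppoly_fps_S:
  "fps_deriv (fps_of_poly (Ppoly f n)) = - (fps_of_poly (Ppoly f n) * Abs_fps (\<lambda>k. Spow f n (k+1)))"
proof -
  let ?p = "Ppoly f n"
  have z: "0 \<notin># proots ?p" using Ppoly_0[of f n] Ppoly_nz[of f n] by auto
  have dec: "?p = (\<Prod>x\<in>#proots ?p. [:-x, 1:])"
    using complex_poly_decompose_multiset[of ?p] lead_Ppoly[of f n] by simp
  have fp: "fps_of_poly ?p = (\<Prod>x\<in>#proots ?p. fps_X + fps_const (-x))"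
    by (subst dec) (simp add: fps_of_poly_prod_mset fps_of_poly_linear)
  have neg: "Abs_fps (\<lambda>k. - (\<Sum>z\<in>#proots ?p. (inverse z) ^ (k+1))) = - Abs_fps (\<lambda>k. Spow f n (k+1))"
    by (rule fps_ext) (simp add: Spow_def)
  show ?thesis unfolding fp
    by (subst logderiv_prod[OF z]) (simp only: neg mult_minus_right)
qed

lemma EE_fps:
  assumes hol: "f holomorphic_on ball 0 1"
    and ser: "\<And>z. z \<in> ball 0 1 \<Longrightarrow> (\<lambda>j. - a j * z ^ j) sums f z"
  shows "fps_deriv (Abs_fps (tcoeff f)) = - (Abs_fps (tcoeff f) * Abs_fps a)"
proof -
  let ?e = "Abs_fps (tcoeff f)"
  have "EE f has_fps_expansion fps_expansion (EE f) 0"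
    by (rule has_fps_expansion_fps_expansion[OF open_ball _ EE_holo[OF hol]]) simp
  then have h1: "EE f has_fps_expansion ?e"
    by (simp add: fps_expansion_def tcoeff_EE[abs_def])
  have ev: "eventually (\<lambda>u. u \<in> ball 0 1) (nhds (0::complex))"
    by (intro eventually_nhds_in_open) auto
  have h2: "f has_fps_expansion (- Abs_fps a)"
    by (rule has_fps_expansionI, rule eventually_mono[OF ev]) (use ser in simp)
  have h3: "deriv (EE f) has_fps_expansion fps_deriv ?e"
    by (rule has_fps_expansion_deriv[OF h1])
  have h4: "(\<lambda>z. f z * EE f z) has_fps_expansion (- Abs_fps a) * ?e"
    by (rule has_fps_expansion_mult[OF h2 h1])
  have ev2: "eventually (\<lambda>z. deriv (EE f) z = f z * EE f z) (nhds 0)"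
    by (rule eventually_mono[OF ev]) (use EE_deriv[OF hol] DERIV_imp_deriv in blast)
  show ?thesis
  proof (rule fps_ext)
    fix m
    have "fps_nth (fps_deriv ?e) m = (deriv ^^ m) (deriv (EE f)) 0 / fact m"
      by (rule fps_nth_fps_expansion[OF h3])
    also have "(deriv ^^ m) (deriv (EE f)) 0 = (deriv ^^ m) (\<lambda>z. f z * EE f z) 0"
      by (rule higher_deriv_cong_ev[OF ev2 refl])
    also have "\<dots> / fact m = fps_nth ((- Abs_fps a) * ?e) m"
      by (rule fps_nth_fps_expansion[OF h4, symmetric])
    finally show "fps_nth (fps_deriv ?e) m = fps_nth (- (?e * Abs_fps a)) m"
      by (simp add: mult.commute)
  qed
qed

lemma newton:
  assumes hol: "f holomorphic_on ball 0 1"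
    and ser: "\<And>z. z \<in> ball 0 1 \<Longrightarrow> (\<lambda>j. - a j * z ^ j) sums f z"
  shows "k \<le> n \<Longrightarrow> Spow f n (k+1) - a k =
     (if k < n then 0 else of_nat (n+1) * (tcoeff f (n+1) - cnj (tcoeff f n)))"
proof (induction k rule: less_induct)
  case (less k)
  let ?Q = "coeff (Ppoly f n)"
  let ?t = "tcoeff f"
  let ?D = "\<lambda>i. Spow f n (i+1) - a i"
  have Q: "\<And>i. i \<le> n \<Longrightarrow> ?Q i = ?t i" by (simp add: coeff_Ppoly)
  have Q0: "?Q 0 = 1" by (simp add: Q tcoeff_0)
  have e1: "of_nat (k+1) * ?Q (k+1) = - (\<Sum>i=0..k. ?Q i * Spow f n (k - i + 1))"
    using arg_cong[OF Ppoly_fps_S[of f n], of "\<lambda>F. fps_nth F k"]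
    by (simp add: fps_mult_nth)
  have e2: "of_nat (k+1) * ?t (k+1) = - (\<Sum>i=0..k. ?t i * a (k - i))"
    using arg_cong[OF EE_fps[OF hol ser], of "\<lambda>F. fps_nth F k"]
    by (simp add: fps_mult_nth)
  have "(\<Sum>i=0..k. ?Q i * ?D (k - i)) = (\<Sum>i=0..k. ?Q i * Spow f n (k - i + 1)) - (\<Sum>i=0..k. ?Q i * a (k - i))"
    by (simp add: algebra_simps sum_subtractf)
  also have "(\<Sum>i=0..k. ?Q i * a (k - i)) = (\<Sum>i=0..k. ?t i * a (k - i))"
    using less.prems by (intro sum.cong refl) (simp add: Q)
  finally have s1: "(\<Sum>i=0..k. ?Q i * ?D (k - i)) = of_nat (k+1) * (?t (k+1) - ?Q (k+1))"
    using e1 e2 by (simp add: algebra_simps)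
  have "(\<Sum>i=0..k. ?Q i * ?D (k - i)) = ?Q 0 * ?D k + (\<Sum>i=1..k. ?Q i * ?D (k - i))"
    by (simp add: sum.atLeast_Suc_atMost)
  also have "(\<Sum>i=1..k. ?Q i * ?D (k - i)) = 0"
  proof (intro sum.neutral ballI)
    fix i assume i: "i \<in> {1..k}"
    have "?D (k - i) = 0" using less.IH[of "k - i"] less.prems i by auto
    then show "?Q i * ?D (k - i) = 0" by simp
  qed
  finally have "?D k = of_nat (k+1) * (?t (k+1) - ?Q (k+1))" using s1 Q0 by simp
  then show ?case using less.prems by (auto simp: coeff_Ppoly)
qed

definition ee :: "real \<Rightarrow> complex" where
  "ee t = exp (2 * of_real pi * \<i> * of_real t)"

lemma norm_ee [simp]: "norm (ee t) = 1"
  unfolding ee_def by (simp add: norm_exp_eq_Re)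

lemma cnj_ee: "cnj (ee t) = inverse (ee t)"
  unfolding ee_def by (simp add: exp_cnj exp_minus[symmetric])

lemma ee_nz [simp]: "ee t \<noteq> 0"
  unfolding ee_def by simp

lemma continuous_on_ee: "continuous_on A ee"
  unfolding ee_def by (intro continuous_intros)

lemma fourier_coeff:
  assumes hol: "g holomorphic_on ball 0 1" and r: "0 < r" "r < 1"
  shows "((\<lambda>t. g (of_real r * ee t) * cnj (ee t) ^ k) has_integral
           (of_real r ^ k * ((deriv ^^ k) g 0 / fact k))) {0..1}"
proof -
  have sub: "cball 0 r \<subseteq> ball (0::complex) 1" using r by auto
  have cont: "continuous_on (cball 0 r) g"
    using holomorphic_on_imp_continuous_on[OF holomorphic_on_subset[OF hol sub]] .
  have holr: "g holomorphic_on ball 0 r"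
    using holomorphic_on_subset[OF hol] sub ball_subset_cball by blast
  have C: "((\<lambda>u. g u / (u - 0) ^ Suc k) has_contour_integral
             ((2 * pi * \<i>) / fact k * (deriv ^^ k) g 0)) (circlepath 0 r)"
    by (rule Cauchy_has_contour_integral_higher_derivative_circlepath[OF cont holr]) (use r in simp)
  have eq: "g (circlepath 0 r x) / (circlepath 0 r x - 0) ^ Suc k *
          vector_derivative (circlepath 0 r) (at x within {0..1}) =
          g (of_real r * ee x) / (of_real r * ee x) ^ Suc k * (2 * pi * \<i> * r * ee x)"
    if "x \<in> {0..1}" for x
    using that by (subst vector_derivative_circlepath01) (auto simp: circlepath ee_def)
  have I: "((\<lambda>t. g (of_real r * ee t) / (of_real r * ee t) ^ Suc k * (2 * pi * \<i> * r * ee t))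
                 has_integral ((2 * pi * \<i>) / fact k * (deriv ^^ k) g 0)) {0..1}"
    using C unfolding has_contour_integral_def by (subst (asm) has_integral_cong[OF eq])
  note I2 = has_integral_mult_left[OF I, of "of_real r ^ k / (2 * pi * \<i>)"]
  show ?thesis
  proof (subst has_integral_cong)
    fix t :: real
    have "g (of_real r * ee t) / (of_real r * ee t) ^ Suc k * (2 * pi * \<i> * r * ee t) *
          (of_real r ^ k / (2 * pi * \<i>)) = g (of_real r * ee t) * inverse (ee t) ^ k"
      using r by (simp add: field_simps power_mult_distrib)
    then show "g (of_real r * ee t) * cnj (ee t) ^ k =
          g (of_real r * ee t) / (of_real r * ee t) ^ Suc k * (2 * pi * \<i> * r * ee t) *
          (of_real r ^ k / (2 * pi * \<i>))" by (simp add: cnj_ee)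
  next
    show "((\<lambda>t. g (of_real r * ee t) / (of_real r * ee t) ^ Suc k * (2 * pi * \<i> * r * ee t) *
          (of_real r ^ k / (2 * pi * \<i>))) has_integral
          (of_real r ^ k * ((deriv ^^ k) g 0 / fact k))) {0..1}"
      using I2 by (simp add: field_simps)
  qed
qed

lemma coeff_from_sums:
  fixes g :: "complex \<Rightarrow> complex"
  assumes "\<And>z. z \<in> ball 0 1 \<Longrightarrow> (\<lambda>k. b k * z ^ k) sums g z"
  shows "(deriv ^^ k) g 0 / fact k = b k"
proof -
  have ev: "eventually (\<lambda>u. u \<in> ball 0 1) (nhds (0::complex))"
    by (intro eventually_nhds_in_open) auto
  have "g has_fps_expansion Abs_fps b"
    by (rule has_fps_expansionI, rule eventually_mono[OF ev]) (use assms in simp)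
  from fps_nth_fps_expansion[OF this, of k] show ?thesis by simp
qed

lemma fourier_poly:
  assumes hol: "g holomorphic_on ball 0 1" and r: "0 < r" "r < 1"
  shows "((\<lambda>t. g (of_real r * ee t) * cnj (\<Sum>k\<le>K. d k * (of_real r * ee t) ^ k)) has_integral
          (\<Sum>k\<le>K. cnj (d k) * of_real r ^ k * (of_real r ^ k * ((deriv ^^ k) g 0 / fact k)))) {0..1}"
proof -
  have "((\<lambda>t. \<Sum>k\<le>K. cnj (d k) * of_real r ^ k * (g (of_real r * ee t) * cnj (ee t) ^ k)) has_integral
          (\<Sum>k\<le>K. cnj (d k) * of_real r ^ k * (of_real r ^ k * ((deriv ^^ k) g 0 / fact k)))) {0..1}"
    by (intro has_integral_sum has_integral_mult_right fourier_coeff[OF hol r]) auto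
  then show ?thesis
    by (subst has_integral_cong[symmetric]) (auto simp: sum_distrib_left power_mult_distrib mult_ac)
qed

lemma L2_r:
  assumes hol: "g holomorphic_on ball 0 1" and M: "\<And>z. z \<in> ball 0 1 \<Longrightarrow> norm (g z) \<le> M"
    and r: "0 < r" "r < 1"
  shows "(\<Sum>k\<le>K. norm ((deriv ^^ k) g 0 / fact k) ^ 2 * r ^ (2*k)) \<le> M ^ 2"
proof -
  define c where "c k = (deriv ^^ k) g 0 / fact k" for k
  define S where "S = (\<Sum>k\<le>K. norm (c k) ^ 2 * r ^ (2*k))"
  define p where "p z = (\<Sum>k\<le>K. c k * z ^ k)" for z
  define u where "u t = g (of_real r * ee t)" for t
  define v where "v t = p (of_real r * ee t)" for t
  have Sc: "(\<Sum>k\<le>K. cnj (c k) * of_real r ^ k * (of_real r ^ k * c k)) = of_real S"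
    unfolding S_def of_real_sum
  proof (intro sum.cong refl)
    fix k
    have a: "complex_of_real (norm (c k) ^ 2) = c k * cnj (c k)" by (rule complex_norm_square)
    have b: "complex_of_real (r ^ (2*k)) = of_real r ^ k * of_real r ^ k"
      by (simp add: power_add[symmetric] mult_2)
    show "cnj (c k) * of_real r ^ k * (of_real r ^ k * c k) = complex_of_real (norm (c k) ^ 2 * r ^ (2*k))"
      by (simp only: of_real_mult a b) (simp add: mult_ac)
  qed
  have i1: "((\<lambda>t. u t * cnj (v t)) has_integral of_real S) {0..1}"
    using fourier_poly[OF hol r, where K=K and d=c] Sc unfolding u_def v_def p_def c_def by simp
  have holp: "p holomorphic_on ball 0 1" unfolding p_def by (intro holomorphic_intros)
  have cp: "(deriv ^^ k) p 0 / fact k = (if k \<le> K then c k else 0)" for k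
  proof (rule coeff_from_sums)
    fix z :: complex
    have "(\<lambda>k. (if k \<le> K then c k else 0) * z ^ k) sums (\<Sum>k\<in>{..K}. (if k \<le> K then c k else 0) * z ^ k)"
      by (rule sums_finite) auto
    then show "(\<lambda>k. (if k \<le> K then c k else 0) * z ^ k) sums p z" by (simp add: p_def)
  qed
  have i2: "((\<lambda>t. v t * cnj (v t)) has_integral of_real S) {0..1}"
    using fourier_poly[OF holp r, where K=K and d=c] Sc unfolding v_def cp
    by (simp add: p_def)
  have contu: "continuous_on {0..1} u"
    unfolding u_def
    by (rule continuous_on_compose2[OF holomorphic_on_imp_continuous_on[OF hol]])
       (use r in \<open>auto intro!: continuous_intros continuous_on_ee simp: norm_mult\<close>)
  have uM: "norm (u t) \<le> M" for t
    unfolding u_def by (rule M) (use r in \<open>simp add: norm_mult\<close>)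
  have "(\<lambda>t. norm (u t) ^ 2) integrable_on {0..1}"
    by (rule integrable_continuous_interval) (intro continuous_intros contu)
  then obtain I1 where I1: "((\<lambda>t. norm (u t) ^ 2) has_integral I1) {0..1}"
    by (auto simp: integrable_on_def)
  have r1: "((\<lambda>t. Re (u t * cnj (v t))) has_integral S) {0..1}"
    using has_integral_Re[OF i1] by simp
  have r2: "((\<lambda>t. Re (v t * cnj (v t))) has_integral S) {0..1}"
    using has_integral_Re[OF i2] by simp
  have "((\<lambda>t. norm (u t) ^ 2 - 2 * Re (u t * cnj (v t)) + Re (v t * cnj (v t))) has_integral
          (I1 - 2 * S + S)) {0..1}"
    by (intro has_integral_add has_integral_diff I1 has_integral_mult_right r1 r2)
  moreover have "norm (u t) ^ 2 - 2 * Re (u t * cnj (v t)) + Re (v t * cnj (v t)) = norm (u t - v t) ^ 2" for t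
    unfolding cmod_power2 by (simp add: power2_eq_square algebra_simps)
  ultimately have "((\<lambda>t. norm (u t - v t) ^ 2) has_integral (I1 - S)) {0..1}" by simp
  then have "0 \<le> I1 - S" by (rule has_integral_nonneg) auto
  moreover have "I1 \<le> M ^ 2"
  proof (rule has_integral_le[OF I1 has_integral_const_real[of "M^2" 0 1, simplified]])
    fix t show "norm (u t) ^ 2 \<le> M ^ 2"
      using uM by (intro power_mono) auto
  qed
  ultimately show ?thesis by (simp add: S_def c_def)
qed

lemma L2_bound:
  assumes hol: "g holomorphic_on ball 0 1" and M: "\<And>z. z \<in> ball 0 1 \<Longrightarrow> norm (g z) \<le> M"
  shows "(\<Sum>k\<le>K. norm ((deriv ^^ k) g 0 / fact k) ^ 2) \<le> M ^ 2"
proof -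
  let ?S = "\<lambda>r::real. (\<Sum>k\<le>K. norm ((deriv ^^ k) g 0 / fact k) ^ 2 * r ^ (2*k))"
  have "(?S \<longlongrightarrow> ?S 1) (at_left 1)"
    by (intro tendsto_intros)
  moreover have "eventually (\<lambda>r. ?S r \<le> M ^ 2) (at_left 1)"
  proof -
    have "eventually (\<lambda>r. r \<in> {0<..<1}) (at_left (1::real))"
      by (rule eventually_at_left_real) simp
    then show ?thesis by (rule eventually_mono) (rule L2_r[OF hol M], auto)
  qed
  ultimately have "?S 1 \<le> M ^ 2"
    by (rule tendsto_upperbound) (simp add: trivial_limit_at_left_real)
  then show ?thesis by simp
qed

lemma sq_summable_tendsto:
  fixes c :: "nat \<Rightarrow> complex"
  assumes "\<And>K. (\<Sum>k\<le>K. norm (c k) ^ 2) \<le> B"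
  shows "summable (\<lambda>k. norm (c k) ^ 2)" "c \<longlonglongrightarrow> 0"
proof -
  show sm: "summable (\<lambda>k. norm (c k) ^ 2)"
  proof (rule summableI_nonneg_bounded)
    fix n
    have "(\<Sum>k<n. norm (c k) ^ 2) \<le> (\<Sum>k\<le>n. norm (c k) ^ 2)"
      by (intro sum_mono2) auto
    then show "(\<Sum>k<n. norm (c k) ^ 2) \<le> B" using assms[of n] by linarith
  qed auto
  have "(\<lambda>k. sqrt (norm (c k) ^ 2)) \<longlonglongrightarrow> sqrt 0"
    by (intro tendsto_real_sqrt summable_LIMSEQ_zero[OF sm])
  then have "(\<lambda>k. norm (c k)) \<longlonglongrightarrow> 0" by simp
  then show "c \<longlonglongrightarrow> 0" by (simp add: tendsto_norm_zero_iff)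
qed

lemma a_tendsto:
  assumes hol: "f holomorphic_on ball 0 1"
    and M: "\<And>z. z \<in> ball 0 1 \<Longrightarrow> norm (f z) \<le> M"
    and ser: "\<And>z. z \<in> ball 0 1 \<Longrightarrow> (\<lambda>j. - a j * z ^ j) sums f z"
  shows "a \<longlonglongrightarrow> 0"
proof -
  have c: "(deriv ^^ k) f 0 / fact k = - a k" for k
    by (rule coeff_from_sums) (use ser in auto)
  have "(\<Sum>k\<le>K. norm (a k) ^ 2) \<le> M ^ 2" for K
    using L2_bound[OF hol M, of K] by (simp add: c)
  then show ?thesis by (rule sq_summable_tendsto)
qed

lemma EE_norm_bounds:
  assumes hol: "f holomorphic_on ball 0 1"
    and M: "\<And>z. z \<in> ball 0 1 \<Longrightarrow> norm (f z) \<le> M" and z: "z \<in> ball 0 1"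
  shows "norm (EE f z) \<le> exp M" "exp (- M) \<le> norm (EE f z)"
proof -
  have M0: "0 \<le> M" using M[of 0] by (simp add: order_trans[OF norm_ge_zero])
  have "norm (prim f z) \<le> M * norm z" by (rule prim_bound[OF hol z M])
  also have "\<dots> \<le> M" using z M0 by (simp add: mult_left_le)
  finally have p: "norm (prim f z) \<le> M" .
  have "\<bar>Re (prim f z)\<bar> \<le> M" using abs_Re_le_cmod[of "prim f z"] p by linarith
  then show "norm (EE f z) \<le> exp M" "exp (- M) \<le> norm (EE f z)"
    by (auto simp: EE_def norm_exp_eq_Re)
qed

lemma t_decay:
  assumes hol: "f holomorphic_on ball 0 1"
    and M: "\<And>z. z \<in> ball 0 1 \<Longrightarrow> norm (f z) \<le> M"
  shows "(\<lambda>k. of_nat k * norm (tcoeff f k)) \<longlonglongrightarrow> 0" "summable (\<lambda>k. norm (tcoeff f k))"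
proof -
  have M0: "0 \<le> M" using M[of 0] by (simp add: order_trans[OF norm_ge_zero])
  define g where "g = deriv (EE f)"
  have holg: "g holomorphic_on ball 0 1"
    unfolding g_def by (rule holomorphic_deriv[OF EE_holo[OF hol] open_ball])
  have gM: "norm (g z) \<le> M * exp M" if z: "z \<in> ball 0 1" for z
  proof -
    have "g z = f z * EE f z" unfolding g_def by (rule DERIV_imp_deriv[OF EE_deriv[OF hol z]])
    then show ?thesis
      using M[OF z] EE_norm_bounds(1)[OF hol M z] by (simp add: norm_mult mult_mono M0)
  qed
  have cg: "(deriv ^^ k) g 0 / fact k = of_nat (Suc k) * tcoeff f (Suc k)" for k
  proof -
    have "(deriv ^^ k) g 0 = (deriv ^^ Suc k) (EE f) 0"
      unfolding g_def funpow_Suc_right by simp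
    then show ?thesis by (simp add: tcoeff_EE fact_Suc field_simps del: of_nat_Suc)
  qed
  define c where "c k = of_nat (Suc k) * tcoeff f (Suc k)" for k
  have "(\<Sum>k\<le>K. norm (c k) ^ 2) \<le> (M * exp M) ^ 2" for K
    using L2_bound[OF holg gM, of K] by (simp add: cg c_def)
  note cc = sq_summable_tendsto[OF this]
  have "(\<lambda>k. norm (c k)) \<longlonglongrightarrow> 0" using cc(2) by (simp add: tendsto_norm_zero_iff)
  then have "(\<lambda>k. of_nat (Suc k) * norm (tcoeff f (Suc k))) \<longlonglongrightarrow> 0"
    by (simp add: c_def norm_mult del: of_nat_Suc)
  then show "(\<lambda>k. of_nat k * norm (tcoeff f k)) \<longlonglongrightarrow> 0"
    by (rule LIMSEQ_imp_Suc)
  have s2: "summable (\<lambda>k. inverse (real (Suc k) ^ 2))"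
    using inverse_power_summable[of 2, where 'a=real] by (subst summable_Suc_iff) simp
  have "summable (\<lambda>k. (norm (c k) ^ 2 + inverse (real (Suc k) ^ 2)) / 2)"
    by (intro summable_divide summable_add cc(1) s2)
  then have "summable (\<lambda>k. norm (tcoeff f (Suc k)))"
  proof (rule summable_comparison_test'[where N=0])
    fix k :: nat
    let ?x = "real (Suc k) * norm (tcoeff f (Suc k))" and ?y = "inverse (real (Suc k))"
    have ineq: "?x * ?y \<le> (?x ^ 2 + ?y ^ 2) / 2"
      using sum_squares_bound[of ?x ?y] by (simp add: power2_eq_square field_simps)
    have eq: "?x * ?y = norm (tcoeff f (Suc k))" by (simp del: of_nat_Suc)
    have nc: "norm (c k) = ?x" by (simp add: c_def norm_mult del: of_nat_Suc)
    have "norm (tcoeff f (Suc k)) \<le> (?x ^ 2 + ?y ^ 2) / 2" using ineq unfolding eq .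
    then show "norm (norm (tcoeff f (Suc k))) \<le> (norm (c k) ^ 2 + inverse (real (Suc k) ^ 2)) / 2"
      unfolding nc by (simp add: power_inverse del: of_nat_Suc)
  qed
  then show "summable (\<lambda>k. norm (tcoeff f k))" by (subst (asm) summable_Suc_iff)
qed

lemma poly_spoly: "poly (spoly f n) z = (\<Sum>k\<le>n. tcoeff f k * z ^ k)"
  by (simp add: spoly_def poly_sum poly_monom)

lemma s_lower:
  assumes hol: "f holomorphic_on ball 0 1"
    and M: "\<And>z. z \<in> ball 0 1 \<Longrightarrow> norm (f z) \<le> M"
  obtains n2 where "\<And>n z. n \<ge> n2 \<Longrightarrow> norm z \<le> 1 \<Longrightarrow> exp (- M) / 2 \<le> norm (poly (spoly f n) z)"
proof -
  let ?t = "tcoeff f"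
  have sm: "summable (\<lambda>k. norm (?t k))" by (rule t_decay[OF hol M])
  obtain n2 where n2: "\<And>n. n \<ge> n2 \<Longrightarrow> norm (\<Sum>i. norm (?t (i + n))) < exp (- M) / 2"
    using suminf_exist_split[OF _ sm, of "exp (- M) / 2"] by auto
  have inner: "exp (- M) / 2 \<le> norm (poly (spoly f n) z)" if n: "n \<ge> n2" and z: "z \<in> ball 0 1" for n z
  proof -
    have zl: "norm z \<le> 1" using z by simp
    have "(\<lambda>k. ?t k * z ^ k) sums EE f z" by (rule EE_sums[OF hol z])
    from sums_split_initial_segment[OF this, of "Suc n"]
    have sp: "(\<lambda>i. ?t (i + Suc n) * z ^ (i + Suc n)) sums (EE f z - poly (spoly f n) z)"
      by (simp add: poly_spoly lessThan_Suc_atMost)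
    have smn: "summable (\<lambda>i. norm (?t (i + Suc n)))"
      using sm by (rule summable_ignore_initial_segment)
    have b1: "norm (?t (i + Suc n) * z ^ (i + Suc n)) \<le> norm (?t (i + Suc n))" for i
    proof -
      have "norm z ^ (i + Suc n) \<le> 1" using zl by (intro power_le_one) auto
      then show ?thesis unfolding norm_mult norm_power by (intro mult_left_le) auto
    qed
    have sn: "summable (\<lambda>i. norm (?t (i + Suc n) * z ^ (i + Suc n)))"
      by (rule summable_comparison_test'[OF smn, where N=0]) (metis b1 norm_ge_zero real_norm_def abs_of_nonneg)
    from summable_norm[OF this]
    have "norm (EE f z - poly (spoly f n) z) \<le> (\<Sum>i. norm (?t (i + Suc n) * z ^ (i + Suc n)))"
      using sp by (simp add: sums_iff)
    also have "\<dots> \<le> (\<Sum>i. norm (?t (i + Suc n)))"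
      by (rule suminf_le[OF b1 sn smn])
    also have "\<dots> < exp (- M) / 2"
      using n2[of "Suc n"] n by (simp add: suminf_nonneg)
    finally have d: "norm (EE f z - poly (spoly f n) z) < exp (- M) / 2" .
    have "exp (- M) \<le> norm (EE f z)" by (rule EE_norm_bounds(2)[OF hol M z])
    then show ?thesis using d norm_triangle_ineq2[of "EE f z" "poly (spoly f n) z"] by linarith
  qed
  show ?thesis
  proof (rule that)
    fix n z assume n: "n \<ge> n2" and z: "norm (z::complex) \<le> 1"
    have "ball 0 1 \<subseteq> {z. exp (- M) / 2 \<le> norm (poly (spoly f n) z)}"
      using inner[OF n] by auto
    moreover have "closed {z. exp (- M) / 2 \<le> norm (poly (spoly f n) z)}"
      by (intro closed_Collect_le continuous_intros)
    ultimately have "closure (ball 0 1) \<subseteq> {z. exp (- M) / 2 \<le> norm (poly (spoly f n) z)}"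
      by (rule closure_minimal)
    then show "exp (- M) / 2 \<le> norm (poly (spoly f n) z)" using z by auto
  qed
qed

lemma poly_Ppoly:
  "poly (Ppoly f n) z = (\<Sum>k\<le>n. tcoeff f k * z ^ k) + (\<Sum>k\<le>n. cnj (tcoeff f k) * z ^ (2*n+1-k))"
  by (simp add: Ppoly_def poly_spoly poly_sum poly_monom)

lemma Ppoly_split:
  "poly (Ppoly f n) z = poly (spoly f n) z + z ^ (n+1) * (\<Sum>k\<le>n. cnj (tcoeff f k) * z ^ (n-k))"
proof -
  have "(\<Sum>k\<le>n. cnj (tcoeff f k) * z ^ (2*n+1-k)) = (\<Sum>k\<le>n. z ^ (n+1) * (cnj (tcoeff f k) * z ^ (n-k)))"
  proof (intro sum.cong refl)
    fix k assume "k \<in> {..n}"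
    then have e: "2*n+1-k = (n+1) + (n-k)" by auto
    show "cnj (tcoeff f k) * z ^ (2*n+1-k) = z ^ (n+1) * (cnj (tcoeff f k) * z ^ (n-k))"
      unfolding e power_add by (simp add: mult_ac)
  qed
  then show ?thesis by (simp add: poly_Ppoly poly_spoly sum_distrib_left)
qed

lemma sstar_circle:
  assumes "norm z = 1"
  shows "(\<Sum>k\<le>n. cnj (tcoeff f k) * z ^ (n-k)) = z ^ n * cnj (poly (spoly f n) z)"
proof -
  have z0: "z \<noteq> 0" using assms by auto
  have "z * cnj z = 1" using complex_norm_square[of z] assms by simp
  then have cz: "cnj z = inverse z" using inverse_unique by metis
  show ?thesis
    unfolding poly_spoly cnj_sum sum_distrib_left
  proof (intro sum.cong refl)
    fix k assume "k \<in> {..n}"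
    then show "cnj (tcoeff f k) * z ^ (n-k) = z ^ n * cnj (tcoeff f k * z ^ k)"
      using z0 by (simp add: power_diff_conv_inverse cz power_inverse mult_ac)
  qed
qed

lemma Ppoly_coeff_sym:
  "i \<le> 2*n+1 \<Longrightarrow> coeff (Ppoly f n) (2*n+1-i) = cnj (coeff (Ppoly f n) i)"
  by (auto simp: coeff_Ppoly)

lemma Ppoly_selfinv:
  assumes z0: "z \<noteq> 0"
  shows "poly (Ppoly f n) z = z ^ (2*n+1) * cnj (poly (Ppoly f n) (inverse (cnj z)))"
proof -
  let ?N = "2*n+1" and ?p = "coeff (Ppoly f n)"
  have "z ^ ?N * cnj (poly (Ppoly f n) (inverse (cnj z))) = (\<Sum>i\<le>?N. cnj (?p i) * (z ^ ?N * inverse z ^ i))"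
    unfolding poly_altdef degree_Ppoly cnj_sum sum_distrib_left
    by (intro sum.cong refl) (simp add: mult_ac)
  also have "\<dots> = (\<Sum>i\<le>?N. ?p (?N - i) * z ^ (?N - i))"
    using z0 by (intro sum.cong refl) (simp add: Ppoly_coeff_sym[simplified] power_diff_conv_inverse)
  also have "\<dots> = (\<Sum>i\<le>?N. ?p i * z ^ i)"
    by (rule sum.reindex_bij_witness[where i="\<lambda>i. ?N - i" and j="\<lambda>i. ?N - i"]) auto
  also have "\<dots> = poly (Ppoly f n) z" by (simp add: poly_altdef degree_Ppoly)
  finally show ?thesis ..
qed

lemma roots_on_circle:
  assumes nz: "\<And>z. norm z \<le> 1 \<Longrightarrow> poly (spoly f n) z \<noteq> 0"
    and root: "poly (Ppoly f n) z = 0"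
  shows "norm z = 1"
proof -
  let ?s = "poly (spoly f n)"
  let ?ss = "\<lambda>z. \<Sum>k\<le>n. cnj (tcoeff f k) * z ^ (n-k)"
  define h where "h z = z ^ n * ?ss z / ?s z" for z
  have inner: "poly (Ppoly f n) w \<noteq> 0" if w: "norm w < 1" for w
  proof -
    have "norm (h w) \<le> 1"
    proof (rule maximum_modulus_frontier[where S="ball 0 1" and f=h and \<xi>=w])
      show "h holomorphic_on interior (ball 0 1)"
        unfolding h_def using nz by (intro holomorphic_intros) auto
      show "continuous_on (closure (ball 0 1)) h"
        unfolding h_def using nz by (intro continuous_intros) auto
      fix u :: complex assume "u \<in> frontier (ball 0 1)"
      then have u: "norm u = 1" by simp
      have "norm (h u) = norm (u ^ n * (u ^ n * cnj (?s u)) / ?s u)"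
        unfolding h_def using sstar_circle[OF u] by simp
      also have "\<dots> = 1" using u nz[of u] by (simp add: norm_mult norm_divide norm_power)
      finally show "norm (h u) \<le> 1" by simp
    qed (use w in auto)
    then have "norm w * norm (h w) \<le> norm w * 1" by (intro mult_left_mono) auto
    then have "norm (w * h w) < 1" using w by (simp add: norm_mult)
    moreover have "1 - norm (w * h w) \<le> norm (1 + w * h w)"
      using norm_diff_ineq[of 1 "w * h w"] by simp
    ultimately have "1 + w * h w \<noteq> 0" by auto
    moreover have "poly (Ppoly f n) w = ?s w * (1 + w * h w)"
      using nz[of w] w by (simp add: Ppoly_split h_def field_simps)
    ultimately show ?thesis using nz[of w] w by simp
  qed
  have z0: "z \<noteq> 0" using root by (auto simp: Ppoly_0)
  show ?thesis
  proof (rule ccontr)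
    assume "norm z \<noteq> 1"
    then consider "norm z < 1" | "norm z > 1" by linarith
    then show False
    proof cases
      case 1 then show False using inner root by blast
    next
      case 2
      then have "norm (inverse (cnj z)) < 1" by (simp add: norm_inverse inverse_less_1_iff)
      then have "poly (Ppoly f n) (inverse (cnj z)) \<noteq> 0" by (rule inner)
      then show False using Ppoly_selfinv[OF z0, of f n] root z0 by simp
    qed
  qed
qed

lemma pderiv_sum': "pderiv (sum g A) = (\<Sum>x\<in>A. pderiv (g x))"
  using higher_pderiv_sum[of 1 g A] by simp

lemma poly_pderiv_Ppoly:
  "z * poly (pderiv (Ppoly f n)) z = (\<Sum>k\<le>n. of_nat k * tcoeff f k * z ^ k) +
      (\<Sum>k\<le>n. of_nat (2*n+1-k) * cnj (tcoeff f k) * z ^ (2*n+1-k))"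
proof -
  have "z * poly (pderiv (Ppoly f n)) z = (\<Sum>k\<le>n. z * (of_nat k * tcoeff f k * z ^ (k - 1))) +
      (\<Sum>k\<le>n. z * (of_nat (2*n+1-k) * cnj (tcoeff f k) * z ^ (2*n+1-k - 1)))"
    by (simp add: Ppoly_def spoly_def pderiv_add pderiv_sum' pderiv_monom poly_sum poly_monom
        sum_distrib_left distrib_left)
  also have "(\<Sum>k\<le>n. z * (of_nat k * tcoeff f k * z ^ (k - 1))) = (\<Sum>k\<le>n. of_nat k * tcoeff f k * z ^ k)"
  proof (intro sum.cong refl)
    fix k show "z * (of_nat k * tcoeff f k * z ^ (k - 1)) = of_nat k * tcoeff f k * z ^ k"
      by (cases k) (auto simp: mult_ac)
  qed
  also have "(\<Sum>k\<le>n. z * (of_nat (2*n+1-k) * cnj (tcoeff f k) * z ^ (2*n+1-k - 1))) =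
      (\<Sum>k\<le>n. of_nat (2*n+1-k) * cnj (tcoeff f k) * z ^ (2*n+1-k))"
  proof (intro sum.cong refl)
    fix k assume "k \<in> {..n}"
    then have e: "2*n+1-k = Suc (2*n+1-k - 1)" by auto
    show "z * (of_nat (2*n+1-k) * cnj (tcoeff f k) * z ^ (2*n+1-k - 1)) =
          of_nat (2*n+1-k) * cnj (tcoeff f k) * z ^ (2*n+1-k)"
      by (subst (3) e) (simp only: power_Suc mult_ac)
  qed
  finally show ?thesis .
qed

lemma roots_simple:
  assumes m: "0 < m" and low: "\<And>z. norm z \<le> 1 \<Longrightarrow> m \<le> norm (poly (spoly f n) z)"
    and small: "2 * (\<Sum>k\<le>n. real k * norm (tcoeff f k)) < real (2*n+1) * m"
    and root: "poly (Ppoly f n) z = 0"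
  shows "order z (Ppoly f n) = 1"
proof -
  let ?t = "tcoeff f"
  define N where "N = 2*n+1"
  define A where "A = (\<Sum>k\<le>n. ?t k * z ^ k)"
  define B where "B = (\<Sum>k\<le>n. cnj (?t k) * z ^ (N-k))"
  define d where "d = (\<Sum>k\<le>n. of_nat k * ?t k * z ^ k)"
  have nz: "\<And>z. norm z \<le> 1 \<Longrightarrow> poly (spoly f n) z \<noteq> 0" using low m by force
  have zc: "norm z = 1" by (rule roots_on_circle[OF nz root])
  have z0: "z \<noteq> 0" using zc by auto
  have "z * cnj z = 1" using complex_norm_square[of z] zc by simp
  then have cz: "cnj z = inverse z" using inverse_unique by metis
  have AB: "A + B = 0" using root by (simp add: poly_Ppoly A_def B_def N_def)
  have Am: "m \<le> norm A" using low[of z] zc by (simp add: A_def poly_spoly)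
  have dle: "norm d \<le> (\<Sum>k\<le>n. real k * norm (?t k))"
    unfolding d_def
  proof (rule order_trans[OF norm_sum], rule sum_mono)
    fix k show "norm (of_nat k * ?t k * z ^ k) \<le> real k * norm (?t k)"
      using zc by (simp add: norm_mult norm_power)
  qed
  have s1: "(\<Sum>k\<le>n. of_nat (N-k) * cnj (?t k) * z ^ (N-k)) =
            of_nat N * B - (\<Sum>k\<le>n. of_nat k * cnj (?t k) * z ^ (N-k))"
    unfolding B_def sum_distrib_left sum_subtractf[symmetric]
    by (intro sum.cong refl) (auto simp: N_def of_nat_diff algebra_simps)
  have s2: "(\<Sum>k\<le>n. of_nat k * cnj (?t k) * z ^ (N-k)) = z ^ N * cnj d"
    unfolding d_def cnj_sum sum_distrib_left
  proof (intro sum.cong refl)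
    fix k assume "k \<in> {..n}"
    then have "k \<le> N" by (simp add: N_def)
    then show "of_nat k * cnj (?t k) * z ^ (N-k) = z ^ N * cnj (of_nat k * ?t k * z ^ k)"
      using z0 by (simp add: power_diff_conv_inverse cz power_inverse mult_ac)
  qed
  have pp: "z * poly (pderiv (Ppoly f n)) z = d + (\<Sum>k\<le>n. of_nat (N-k) * cnj (?t k) * z ^ (N-k))"
    using poly_pderiv_Ppoly[of z f n] unfolding d_def N_def .
  have "z * poly (pderiv (Ppoly f n)) z = d + (of_nat N * B - z ^ N * cnj d)"
    by (simp only: pp s1 s2)
  moreover have "B = - A" using AB by (simp add: add_eq_0_iff)
  ultimately have zP: "z * poly (pderiv (Ppoly f n)) z = d - of_nat N * A - z ^ N * cnj d"
    by simp
  have pd: "poly (pderiv (Ppoly f n)) z \<noteq> 0"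
  proof
    assume "poly (pderiv (Ppoly f n)) z = 0"
    then have "of_nat N * A = d - z ^ N * cnj d" using zP by (simp add: algebra_simps)
    then have "norm (of_nat N * A) \<le> norm d + norm (z ^ N * cnj d)"
      by (metis norm_triangle_ineq4)
    also have "norm (z ^ N * cnj d) = norm d" using zc by (simp add: norm_mult norm_power)
    finally have "real N * norm A \<le> 2 * norm d" by (simp add: norm_mult)
    moreover have "real N * m \<le> real N * norm A" using Am by (intro mult_left_mono) auto
    ultimately show False using small dle unfolding N_def by linarith
  qed
  have P0: "Ppoly f n \<noteq> 0" by (rule Ppoly_nz)
  have "order z (Ppoly f n) = Suc (order z (pderiv (Ppoly f n)))"
    by (rule order_pderiv[OF P0 root])
  moreover have "order z (pderiv (Ppoly f n)) = 0"
    using pd order_root by blast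
  ultimately show ?thesis by simp
qed

lemma norm_sum_mset_le:
  assumes "\<And>z. z \<in># Z \<Longrightarrow> norm (g z :: complex) \<le> 1"
  shows "norm (\<Sum>z\<in>#Z. g z) \<le> real (size Z)"
  using assms
proof (induction Z)
  case empty then show ?case by simp
next
  case (add x Z)
  have "norm (\<Sum>z\<in>#add_mset x Z. g z) \<le> norm (g x) + norm (\<Sum>z\<in>#Z. g z)"
    by (simp add: norm_triangle_ineq)
  also have "\<dots> \<le> 1 + real (size Z)" using add by (intro add_mono) auto
  finally show ?case by simp
qed

lemma norm_Spow_le:
  assumes "\<And>z. poly (Ppoly f n) z = 0 \<Longrightarrow> norm z = 1"
  shows "norm (Spow f n v) \<le> real (2*n+1)"
proof -
  have "norm (Spow f n v) \<le> real (size (proots (Ppoly f n)))"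
    unfolding Spow_def
  proof (rule norm_sum_mset_le)
    fix z assume "z \<in># proots (Ppoly f n)"
    then have "poly (Ppoly f n) z = 0" using Ppoly_nz[of f n] by simp
    then have "norm z = 1" by (rule assms)
    then show "norm (inverse z ^ v) \<le> 1" by (simp add: norm_power norm_inverse)
  qed
  then show ?thesis by (simp add: size_proots_complex degree_Ppoly)
qed

lemma card_roots:
  assumes "\<And>z. poly (Ppoly f n) z = 0 \<Longrightarrow> order z (Ppoly f n) = 1"
  shows "card {z. poly (Ppoly f n) z = 0} = 2*n+1"
proof -
  have P0: "Ppoly f n \<noteq> 0" by (rule Ppoly_nz)
  have "2*n+1 = size (proots (Ppoly f n))" by (simp add: size_proots_complex degree_Ppoly)
  also have "\<dots> = sum (count (proots (Ppoly f n))) {z. poly (Ppoly f n) z = 0}"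
    by (simp add: size_multiset_overloaded_eq set_count_proots[OF P0])
  also have "\<dots> = sum (\<lambda>_. 1) {z. poly (Ppoly f n) z = 0}"
    by (intro sum.cong refl) (simp add: count_proots[OF P0] assms)
  finally show ?thesis by simp
qed

lemma est_gt:
  fixes r \<epsilon> D :: real
  assumes e: "0 < \<epsilon>" "\<epsilon> < r" "r < 1" and j: "n+1 \<le> j" and D: "D \<le> 2*n+2"
  shows "D < r ^ (n+1) / (r - \<epsilon>) ^ j / (2 * \<epsilon> * (1 - r))"
proof -
  define x where "x = r - \<epsilon>"
  have x: "0 < x" "x < r" "x < 1" using e by (auto simp: x_def)
  have "r ^ Suc (n+1) - x ^ Suc (n+1) = (r - x) * (\<Sum>p<Suc (n+1). r ^ p * x ^ (n+1 - p))"
    by (rule diff_power_eq_sum)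
  moreover have "(\<Sum>p<Suc (n+1). r ^ p * x ^ (n+1 - p)) \<ge> (\<Sum>p<Suc (n+1). x ^ (n+1))"
  proof (rule sum_mono)
    fix p assume "p \<in> {..<Suc (n+1)}"
    then have "x ^ (n+1) = x ^ p * x ^ (n+1-p)" by (simp add: power_add[symmetric])
    also have "\<dots> \<le> r ^ p * x ^ (n+1-p)"
      using x by (intro mult_right_mono power_mono) auto
    finally show "x ^ (n+1) \<le> r ^ p * x ^ (n+1 - p)" .
  qed
  ultimately have "r ^ (n+2) - x ^ (n+2) \<ge> \<epsilon> * (real (n+2) * x ^ (n+1))"
    using e by (auto simp: x_def intro!: mult_left_mono)
  moreover have "x ^ (n+2) > 0" using x by simp
  ultimately have k1: "\<epsilon> * x ^ (n+1) * real (n+2) < r ^ (n+2)" by (simp add: mult_ac)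
  have k2: "x ^ j \<le> x ^ (n+1)" using x j by (intro power_decreasing) auto
  have k3: "4 * r * (1 - r) \<le> 1"
    using sum_squares_bound[of "2*r - 1" 0] by (simp add: power2_eq_square algebra_simps)
  have pos: "0 < 2 * \<epsilon> * (1 - r)" "0 < x ^ j" using e x by auto
  have "D * (x ^ j * (2 * \<epsilon> * (1 - r))) \<le> (2 * real (n+2)) * (x ^ (n+1) * (2 * \<epsilon> * (1 - r)))"
  proof (cases "D \<ge> 0")
    case True
    show ?thesis
      using True D k2 pos e x by (intro mult_mono) (auto intro!: mult_right_mono)
  next
    case False
    then have "D * (x ^ j * (2 * \<epsilon> * (1 - r))) \<le> 0" using pos
      by (intro mult_nonpos_nonneg) auto
    also have "0 \<le> (2 * real (n+2)) * (x ^ (n+1) * (2 * \<epsilon> * (1 - r)))" using pos x by auto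
    finally show ?thesis .
  qed
  also have "\<dots> = 4 * (1 - r) * (\<epsilon> * x ^ (n+1) * real (n+2))" by (simp add: algebra_simps)
  also have "\<dots> < 4 * (1 - r) * r ^ (n+2)" using k1 e by (intro mult_strict_left_mono) auto
  also have "\<dots> = (4 * r * (1 - r)) * r ^ (n+1)" by (simp add: algebra_simps)
  also have "\<dots> \<le> 1 * r ^ (n+1)" using k3 e by (intro mult_right_mono) auto
  finally have "D * (x ^ j * (2 * \<epsilon> * (1 - r))) < r ^ (n+1)" by simp
  then show ?thesis using pos unfolding x_def[symmetric]
    by (simp add: divide_divide_eq_left pos_less_divide_eq)
qed

lemma est_eq:
  fixes r \<epsilon> D :: real
  assumes e: "0 < \<epsilon>" "\<epsilon> < r" "r < 1" and D: "0 \<le> D" "D \<le> 1/2"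
  shows "D < r ^ (n+1) / (r - \<epsilon>) ^ n / (2 * \<epsilon> * (1 - r))"
proof -
  define x where "x = r - \<epsilon>"
  have x: "0 < x" "x < r" using e by (auto simp: x_def)
  have pos: "0 < 2 * \<epsilon> * (1 - r)" "0 < x ^ n" using e x by auto
  have "x ^ n * (2 * \<epsilon> * (1 - r)) < r ^ n * (2 * r)"
  proof (rule mult_le_less_imp_less)
    show "x ^ n \<le> r ^ n" using x by (intro power_mono) auto
    have "\<epsilon> * (1 - r) < r * 1" using e by (intro mult_strict_mono) auto
    then show "2 * \<epsilon> * (1 - r) < 2 * r" by simp
  qed (use x pos in auto)
  note lt = this
  have "D * (x ^ n * (2 * \<epsilon> * (1 - r))) < r ^ (n+1)"
  proof (cases "D = 0")
    case True then show ?thesis using e by simp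
  next
    case False
    then have "D * (x ^ n * (2 * \<epsilon> * (1 - r))) < D * (r ^ n * (2 * r))"
      using D lt by (intro mult_strict_left_mono) auto
    also have "\<dots> \<le> 1/2 * (r ^ n * (2 * r))" using D e by (intro mult_right_mono) auto
    finally show ?thesis by (simp add: mult.commute)
  qed
  then show ?thesis using pos unfolding x_def[symmetric]
    by (simp add: divide_divide_eq_left pos_less_divide_eq)
qed

lemma eventually_small:
  fixes u :: "nat \<Rightarrow> real"
  assumes "u \<longlonglongrightarrow> 0" "e > 0"
  obtains K where "\<And>k. k \<ge> K \<Longrightarrow> \<bar>u k\<bar> \<le> e"
proof -
  have "eventually (\<lambda>k. dist (u k) 0 < e) sequentially"
    using assms tendsto_iff by blast
  then obtain K where "\<And>k. k \<ge> K \<Longrightarrow> dist (u k) 0 < e" by (auto simp: eventually_sequentially)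
  then show ?thesis using that by (force simp: dist_real_def)
qed

lemma cesaro_bound:
  fixes b :: "nat \<Rightarrow> real"
  assumes nn: "\<And>k. 0 \<le> b k" and K: "\<And>k. k \<ge> K \<Longrightarrow> b k \<le> e"
  shows "(\<Sum>k\<le>n. b k) \<le> (\<Sum>k<K. b k) + real (n+1) * e"
proof (cases "n < K")
  case True
  have "(\<Sum>k\<le>n. b k) \<le> (\<Sum>k<K. b k)" using True nn by (intro sum_mono2) auto
  moreover have "0 \<le> e" using K[of K] nn[of K] by simp
  ultimately show ?thesis by (simp add: add_increasing2)
next
  case False
  have u: "{..n} = {..<K} \<union> {K..n}" using False by auto
  have "(\<Sum>k\<le>n. b k) = (\<Sum>k<K. b k) + (\<Sum>k\<in>{K..n}. b k)"
    unfolding u by (rule sum.union_disjoint) auto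
  also have "(\<Sum>k\<in>{K..n}. b k) \<le> (\<Sum>k\<in>{K..n}. e)" using K by (intro sum_mono) auto
  also have "\<dots> = real (n + 1 - K) * e" by simp
  also have "\<dots> \<le> real (n+1) * e"
    using K[of K] nn[of K] by (intro mult_right_mono) auto
  finally show ?thesis by simp
qed

theorem theorem1p1:
  fixes f :: "complex \<Rightarrow> complex" and a :: "nat \<Rightarrow> complex"
  assumes hol: "f holomorphic_on ball 0 1"
    and bdd: "bounded (f ` ball 0 1)"
    and ser: "\<And>z. z \<in> ball 0 1 \<Longrightarrow> (\<lambda>j. - a j * z ^ j) sums f z"
  shows "(\<exists>n1. (\<exists>m. s_nonvanishing f m) \<and> n0 f \<le> n1 \<and>
            (\<forall>n\<ge>n1.
              (\<forall>z. poly (Ppoly f n) z = 0 \<longrightarrow> norm z = 1 \<and> order z (Ppoly f n) = 1) \<and>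
              card {z. poly (Ppoly f n) z = 0} = 2*n+1 \<and>
              (\<forall>j<n. Spow f n (j+1) - a j = 0) \<and>
              (\<forall>j\<ge>n. \<forall>r \<epsilon>::real. 0 < \<epsilon> \<and> \<epsilon> < r \<and> r < 1 \<longrightarrow>
                 norm (Spow f n (j+1) - a j) < r ^ (n+1) / (r - \<epsilon>) ^ j / (2 * \<epsilon> * (1 - r)))))
         \<and> (\<forall>n. (\<exists>m. s_nonvanishing f m) \<and> n0 f \<le> n \<longrightarrow> (\<forall>j<n. Spow f n (j+1) - a j = 0))"
proof -
  let ?t = "tcoeff f"
  obtain M where "M > 0" "\<forall>x\<in>f ` ball 0 1. norm x \<le> M"
    using bdd bounded_pos by blast
  then have M: "\<And>z. z \<in> ball 0 1 \<Longrightarrow> norm (f z) \<le> M" by blast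
  define m where "m = exp (- M) / 2"
  have m0: "0 < m" by (simp add: m_def)
  obtain n2 where n2: "\<And>n z. n \<ge> n2 \<Longrightarrow> norm z \<le> 1 \<Longrightarrow> m \<le> norm (poly (spoly f n) z)"
    using s_lower[OF hol M] unfolding m_def by metis
  have kt: "(\<lambda>k. of_nat k * norm (?t k)) \<longlonglongrightarrow> 0" by (rule t_decay[OF hol M])
  define e0 where "e0 = min (m/4) (1/8)"
  have e0: "0 < e0" using m0 by (simp add: e0_def)
  obtain K1 where K1: "\<And>k. k \<ge> K1 \<Longrightarrow> real k * norm (?t k) \<le> e0"
    using eventually_small[OF kt e0] by (metis abs_of_nonneg mult_nonneg_nonneg norm_ge_zero of_nat_0_le_iff)
  have at: "a \<longlonglongrightarrow> 0" by (rule a_tendsto[OF hol M ser])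
  then have "(\<lambda>j. norm (a j)) \<longlonglongrightarrow> 0" by (simp add: tendsto_norm_zero_iff)
  then obtain K2 where K2: "\<And>j. j \<ge> K2 \<Longrightarrow> norm (a j) \<le> 1"
    using eventually_small[of "\<lambda>j. norm (a j)" 1] by auto
  define C where "C = (\<Sum>k<K1. real k * norm (?t k))"
  obtain n3 :: nat where n3: "2 * C / m < real n3" using reals_Archimedean2 by blast
  define n1 where "n1 = max (max n2 n3) (max (max K1 K2) 1)"
  have newt: "\<And>n j. j < n \<Longrightarrow> Spow f n (j+1) - a j = 0"
    using newton[OF hol ser] by (metis less_imp_le)
  have snv: "s_nonvanishing f n1"
    unfolding s_nonvanishing_def using n2[of n1] m0 by (force simp: n1_def)
  have main: "(\<forall>z. poly (Ppoly f n) z = 0 \<longrightarrow> norm z = 1 \<and> order z (Ppoly f n) = 1) \<and>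
              card {z. poly (Ppoly f n) z = 0} = 2*n+1 \<and>
              (\<forall>j<n. Spow f n (j+1) - a j = 0) \<and>
              (\<forall>j\<ge>n. \<forall>r \<epsilon>::real. 0 < \<epsilon> \<and> \<epsilon> < r \<and> r < 1 \<longrightarrow>
                 norm (Spow f n (j+1) - a j) < r ^ (n+1) / (r - \<epsilon>) ^ j / (2 * \<epsilon> * (1 - r)))"
    if n: "n \<ge> n1" for n
  proof -
    have low: "\<And>z. norm z \<le> 1 \<Longrightarrow> m \<le> norm (poly (spoly f n) z)"
      using n2 n by (simp add: n1_def)
    have nz: "\<And>z. norm z \<le> 1 \<Longrightarrow> poly (spoly f n) z \<noteq> 0" using low m0 by force
    have circ: "\<And>z. poly (Ppoly f n) z = 0 \<Longrightarrow> norm z = 1"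
      by (rule roots_on_circle[OF nz])
    have "(\<Sum>k\<le>n. real k * norm (?t k)) \<le> C + real (n+1) * e0"
      unfolding C_def by (rule cesaro_bound) (use K1 in auto)
    also have "\<dots> \<le> C + real (n+1) * (m/4)"
      by (intro add_left_mono mult_left_mono) (auto simp: e0_def)
    finally have sb: "(\<Sum>k\<le>n. real k * norm (?t k)) \<le> C + real (n+1) * (m/4)" .
    have "2 * C < real n3 * m" using n3 m0 by (simp add: field_simps)
    also have "\<dots> \<le> real n * m" using n m0 by (intro mult_right_mono) (auto simp: n1_def)
    finally have "2 * C < real n * m" .
    have small: "2 * (\<Sum>k\<le>n. real k * norm (?t k)) < real (2*n+1) * m"
    proof -
      have h1: "0 \<le> m * real n" using m0 by simp
      have h2: "real (2*n+1) * m = m + 2 * (m * real n)" by (simp add: algebra_simps)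
      have h3: "C + real (n+1) * (m/4) = C + m/4 + (m * real n)/4" by (simp add: algebra_simps)
      have h4: "2 * C < m * real n" using \<open>2 * C < real n * m\<close> by (simp add: mult.commute)
      have h5: "2 * (\<Sum>k\<le>n. real k * norm (?t k)) \<le> 2 * C + m/2 + (m * real n)/2"
        using sb unfolding h3 by linarith
      show ?thesis unfolding h2 using h1 h4 h5 m0 by linarith
    qed
    have simple: "\<And>z. poly (Ppoly f n) z = 0 \<Longrightarrow> order z (Ppoly f n) = 1"
      by (rule roots_simple[OF m0 low small])
    have card: "card {z. poly (Ppoly f n) z = 0} = 2*n+1"
      by (rule card_roots[OF simple])
    have est: "norm (Spow f n (j+1) - a j) < r ^ (n+1) / (r - \<epsilon>) ^ j / (2 * \<epsilon> * (1 - r))"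
      if j: "j \<ge> n" and re: "0 < \<epsilon>" "\<epsilon> < r" "r < 1" for j r \<epsilon>
    proof (cases "j = n")
      case True
      have eq: "Spow f n (n+1) - a n = of_nat (n+1) * (?t (n+1) - cnj (?t n))"
        using newton[OF hol ser, of n n] by simp
      have n1': "n \<ge> 1" "n \<ge> K1" using n by (auto simp: n1_def)
      have b1: "real (n+1) * norm (?t (n+1)) \<le> 1/8"
        using K1[of "n+1"] n1' by (simp add: e0_def)
      have b2: "real n * norm (?t n) \<le> 1/8"
        using K1[of n] n1' by (simp add: e0_def)
      have "real (n+1) * norm (?t n) \<le> 2 * (real n * norm (?t n))"
        using n1' by (intro order_trans[OF mult_right_mono[of "real (n+1)" "2 * real n"]]) auto
      then have b3: "real (n+1) * norm (?t n) \<le> 1/4" using b2 by linarith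
      have "norm (Spow f n (n+1) - a n) \<le> real (n+1) * norm (?t (n+1)) + real (n+1) * norm (?t n)"
        unfolding eq norm_mult
        using norm_triangle_ineq4[of "?t (n+1)" "cnj (?t n)"]
        by (simp add: distrib_left[symmetric] mult_left_mono del: of_nat_Suc)
      then have "norm (Spow f n (n+1) - a n) \<le> 1/2" using b1 b3 by linarith
      then show ?thesis using True est_eq[OF re, of "norm (Spow f n (n+1) - a n)" n] by simp
    next
      case False
      then have j1: "n+1 \<le> j" using j by simp
      have "norm (Spow f n (j+1) - a j) \<le> norm (Spow f n (j+1)) + norm (a j)"
        by (rule norm_triangle_ineq4)
      also have "\<dots> \<le> real (2*n+1) + 1"
        using norm_Spow_le[OF circ, where v="j+1"] K2[of j] j n by (intro add_mono) (auto simp: n1_def)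
      finally show ?thesis by (intro est_gt[OF re j1]) simp
    qed
    show ?thesis using circ simple card newt est by blast
  qed
  have part1: "\<exists>n1. (\<exists>m. s_nonvanishing f m) \<and> n0 f \<le> n1 \<and>
            (\<forall>n\<ge>n1.
              (\<forall>z. poly (Ppoly f n) z = 0 \<longrightarrow> norm z = 1 \<and> order z (Ppoly f n) = 1) \<and>
              card {z. poly (Ppoly f n) z = 0} = 2*n+1 \<and>
              (\<forall>j<n. Spow f n (j+1) - a j = 0) \<and>
              (\<forall>j\<ge>n. \<forall>r \<epsilon>::real. 0 < \<epsilon> \<and> \<epsilon> < r \<and> r < 1 \<longrightarrow>
                 norm (Spow f n (j+1) - a j) < r ^ (n+1) / (r - \<epsilon>) ^ j / (2 * \<epsilon> * (1 - r))))"
  proof (intro exI conjI allI impI)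
    show "s_nonvanishing f n1" by (rule snv)
    show "n0 f \<le> n1" unfolding n0_def by (rule Least_le) (rule snv)
  qed (use main in auto)
  show ?thesis using part1 newt by blast
qed

end
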